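(* Let $K>0$, $\alpha_1,m_1,\alpha_2,m_2\in(0,1]$, and let $f,g:[0,K]\to[0,\infty)$ be such that $f$ is $(\alpha_1,m_1)$-convex and $g$ is $(\alpha_2,m_2)$-convex on $[0,K]$. Let $0\le a<b\le K$ with $a/m_1\le K$, $a/m_2\le K$, and $f,g\in L^1[a,b]$. Then \begin{align*} \frac{1}{b-a}\int_a^b f(x)^{\frac{x-a}{b-a}}\, g(x)^{\frac{b-x}{b-a}}\,dx &\le \frac{1}{\alpha_1+2}f(b)+\frac{m_1}{2(\alpha_1+2)}f\!\left(\frac{a}{m_1}\right)\\ &\quad+\frac{1}{(\alpha_2+1)(\alpha_2+2)}g(b)+\frac{m_2(\alpha_2^2+3\alpha_2)}{2(\alpha_2+1)(\alpha_2+2)}g\!\left(\frac{a}{m_2}\right). \end{align*}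
   Context: For $(\alpha,m)\in[0,1]^2$ and $K>0$, a function $h:[0,K]\to\mathbb{R}$ is $(\alpha,m)$-convex if $h(tx+m(1-t)y)\le t^{\alpha}h(x)+m(1-t^{\alpha})h(y)$ for all $x,y\in[0,K]$ and $t\in[0,1]$. The convention $0^0=1$ is used in the integrand. *)

theory Defs
  imports "HOL-Analysis.Analysis"
begin

text \<open>Real power with the convention 0^0 = 1 (powr has 0 powr 0 = 0).\<close>
definition pow0 :: "real \<Rightarrow> real \<Rightarrow> real" where
  "pow0 x y = (if x = 0 \<and> y = 0 then 1 else x powr y)"

definition alpha_m_convex :: "real \<Rightarrow> real \<Rightarrow> real \<Rightarrow> (real \<Rightarrow> real) \<Rightarrow> bool" where
  "alpha_m_convex \<alpha> m K h \<longleftrightarrow>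
     (\<forall>x\<in>{0..K}. \<forall>y\<in>{0..K}. \<forall>t\<in>{0..1}.
        h (t * x + m * (1 - t) * y) \<le> pow0 t \<alpha> * h x + m * (1 - pow0 t \<alpha>) * h y)"

end

theory Submission imports Defs begin

lemma pow0_nonneg: "0 \<le> pow0 x y" by (simp add: pow0_def)

lemma pow0_pos_exp: "y \<noteq> 0 \<Longrightarrow> pow0 x y = x powr y" by (simp add: pow0_def)

lemma pow0_meas[measurable]:
  assumes [measurable]: "F \<in> borel_measurable M" "G \<in> borel_measurable M"
  shows "(\<lambda>x. pow0 (F x) (G x)) \<in> borel_measurable M"
  unfolding pow0_def by measurable

lemma amgm:
  fixes F G t :: real
  assumes "0 \<le> F" "0 \<le> G" "0 \<le> t" "t \<le> 1"
  shows "pow0 F t * pow0 G (1 - t) \<le> t * F + (1 - t) * G"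
proof -
  consider "t = 0" | "t = 1" | "0 < t \<and> t < 1" using assms by linarith
  then show ?thesis
  proof cases
    case 1 then show ?thesis using assms by (auto simp: pow0_def)
  next
    case 2 then show ?thesis using assms by (auto simp: pow0_def)
  next
    case 3
    show ?thesis
    proof (cases "F = 0 \<or> G = 0")
      case True then show ?thesis using assms 3 by (auto simp: pow0_def)
    next
      case False
      then have "pow0 F t * pow0 G (1 - t) = F powr t * G powr (1-t)"
        using 3 by (simp add: pow0_def)
      also have "\<dots> \<le> t * F + (1 - t) * G"
        using Youngs_inequality_0[of t "1-t" F G] 3 False assms by auto
      finally show ?thesis .
    qed
  qed
qed

lemma pint:
  fixes a b \<beta> :: real
  assumes "a < b" "\<beta> > -1"
  shows "((\<lambda>x. ((x-a)/(b-a)) powr \<beta>) has_integral ((b-a)/(\<beta>+1))) {a..b}"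
proof -
  have "((\<lambda>x. x powr \<beta>) has_integral (1/(\<beta>+1))) (cbox 0 1)"
    using has_integral_powr_from_0[of \<beta> 1] assms by simp
  from has_integral_affinity'[OF this, of "1/(b-a)" "-a/(b-a)"]
  have H: "((\<lambda>x. ((1/(b-a)) *\<^sub>R x + -a/(b-a)) powr \<beta>) has_integral ((1/(\<beta>+1)) /\<^sub>R (1/(b-a)) ^ DIM(real)))
           (cbox ((0 - -a/(b-a)) /\<^sub>R (1/(b-a))) ((1 - -a/(b-a)) /\<^sub>R (1/(b-a))))"
    using assms by auto
  have e1: "(0 - -a/(b-a)) /\<^sub>R (1/(b-a)) = a" and e2: "(1 - -a/(b-a)) /\<^sub>R (1/(b-a)) = b"
    using assms by (auto simp: field_simps)
  have e3: "(\<lambda>x. ((1/(b-a)) *\<^sub>R x + -a/(b-a)) powr \<beta>) = (\<lambda>x. ((x-a)/(b-a)) powr \<beta>)"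
    by (simp add: diff_divide_distrib)
  have e4: "(1/(\<beta>+1)) /\<^sub>R (1/(b-a)) ^ DIM(real) = (b-a)/(\<beta>+1)" by simp
  show ?thesis using H unfolding e1 e2 e3 e4 cbox_interval .
qed

theorem theorem9:
  fixes f g :: "real \<Rightarrow> real" and K \<alpha>1 m1 \<alpha>2 m2 a b :: real
  assumes "K > 0"
    and "0 < \<alpha>1" "\<alpha>1 \<le> 1" "0 < m1" "m1 \<le> 1"
    and "0 < \<alpha>2" "\<alpha>2 \<le> 1" "0 < m2" "m2 \<le> 1"
    and "\<forall>x\<in>{0..K}. f x \<ge> 0" "\<forall>x\<in>{0..K}. g x \<ge> 0"
    and "alpha_m_convex \<alpha>1 m1 K f" "alpha_m_convex \<alpha>2 m2 K g"
    and "0 \<le> a" "a < b" "b \<le> K" "a / m1 \<le> K" "a / m2 \<le> K"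
    and "set_integrable lborel {a..b} f" "set_integrable lborel {a..b} g"
  shows "set_integrable lborel {a..b}
           (\<lambda>x. pow0 (f x) ((x - a) / (b - a)) * pow0 (g x) ((b - x) / (b - a)))
       \<and> (1 / (b - a)) * (LINT x:{a..b}|lborel.
              pow0 (f x) ((x - a) / (b - a)) * pow0 (g x) ((b - x) / (b - a)))
         \<le> 1 / (\<alpha>1 + 2) * f b + m1 / (2 * (\<alpha>1 + 2)) * f (a / m1)
           + 1 / ((\<alpha>2 + 1) * (\<alpha>2 + 2)) * g b
           + m2 * (\<alpha>2\<^sup>2 + 3 * \<alpha>2) / (2 * (\<alpha>2 + 1) * (\<alpha>2 + 2)) * g (a / m2)"
proof -
  note A = assms
  define T where "T x = (x - a) / (b - a)" for x
  define I where "I x = pow0 (f x) ((x - a) / (b - a)) * pow0 (g x) ((b - x) / (b - a))" for x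
  define fb where "fb = f b"
  define fa where "fa = f (a / m1)"
  define gb where "gb = g b"
  define ga where "ga = g (a / m2)"
  define c1 where "c1 = fb - m1 * fa"
  define c2 where "c2 = m1 * fa"
  define c3 where "c3 = gb"
  define c4 where "c4 = m2 * ga"
  define P where "P x = c1 * T x powr (\<alpha>1 + 1) + c2 * T x + c3 * T x powr \<alpha>2 - c3 * T x powr (\<alpha>2 + 1)
      + (c4 - c4 * T x - c4 * T x powr \<alpha>2 + c4 * T x powr (\<alpha>2 + 1))" for x
  have fa0: "fa \<ge> 0" unfolding fa_def using A by (auto simp: divide_nonneg_pos)
  have ga0: "ga \<ge> 0" unfolding ga_def using A by (auto simp: divide_nonneg_pos)
  have I0: "I x \<ge> 0" for x unfolding I_def by (intro mult_nonneg_nonneg pow0_nonneg)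
  have IP: "I x \<le> P x" if x: "x \<in> {a..b}" for x
  proof -
    define t where "t = T x"
    have t0: "0 \<le> t" and t1: "t \<le> 1" using x A unfolding t_def T_def by (auto simp: field_simps)
    have bt: "(b - x) / (b - a) = 1 - t" using A unfolding t_def T_def by (auto simp: field_simps)
    have xK: "0 \<le> x" "x \<le> K" using x A by auto
    have Fx: "f x \<ge> 0" "g x \<ge> 0" using xK A by auto
    have "I x \<le> t * f x + (1 - t) * g x"
      unfolding I_def bt using amgm[OF Fx t0 t1] unfolding t_def T_def by simp
    moreover have "f x \<le> t powr \<alpha>1 * fb + m1 * (1 - t powr \<alpha>1) * fa"
    proof -
      have "f (t * b + m1 * (1 - t) * (a / m1)) \<le> pow0 t \<alpha>1 * f b + m1 * (1 - pow0 t \<alpha>1) * f (a / m1)"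
        using A(12)[unfolded alpha_m_convex_def, rule_format, of b "a / m1" t] A t0 t1
        by (auto simp: divide_nonneg_pos)
      moreover have e1: "t * b + m1 * (1 - t) * (a / m1) = a + t * (b - a)"
        using A by (simp add: algebra_simps)
      have e2: "a + t * (b - a) = x" using A unfolding t_def T_def by simp
      have "t * b + m1 * (1 - t) * (a / m1) = x" using e1 e2 by simp
      ultimately show ?thesis using A by (simp add: pow0_pos_exp fb_def fa_def)
    qed
    moreover have "g x \<le> t powr \<alpha>2 * gb + m2 * (1 - t powr \<alpha>2) * ga"
    proof -
      have "g (t * b + m2 * (1 - t) * (a / m2)) \<le> pow0 t \<alpha>2 * g b + m2 * (1 - pow0 t \<alpha>2) * g (a / m2)"
        using A(13)[unfolded alpha_m_convex_def, rule_format, of b "a / m2" t] A t0 t1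
        by (auto simp: divide_nonneg_pos)
      moreover have e1: "t * b + m2 * (1 - t) * (a / m2) = a + t * (b - a)"
        using A by (simp add: algebra_simps)
      have e2: "a + t * (b - a) = x" using A unfolding t_def T_def by simp
      have "t * b + m2 * (1 - t) * (a / m2) = x" using e1 e2 by simp
      ultimately show ?thesis using A by (simp add: pow0_pos_exp gb_def ga_def)
    qed
    ultimately have "I x \<le> t * (t powr \<alpha>1 * fb + m1 * (1 - t powr \<alpha>1) * fa)
        + (1 - t) * (t powr \<alpha>2 * gb + m2 * (1 - t powr \<alpha>2) * ga)"
      using t0 t1 by (smt (verit) mult_left_mono)
    also have "\<dots> = P x"
    proof -
      have p1: "t powr (\<alpha>1 + 1) = t * t powr \<alpha>1" using t0 by (simp add: powr_add)
      have p2: "t powr (\<alpha>2 + 1) = t * t powr \<alpha>2" using t0 by (simp add: powr_add)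
      show ?thesis unfolding P_def t_def[symmetric] p1 p2 c1_def c2_def c3_def c4_def
        by (simp add: algebra_simps)
    qed
    finally show ?thesis .
  qed
  have ab: "a < b" using A by simp
  have h1: "((\<lambda>x. T x powr (\<alpha>1 + 1)) has_integral ((b-a)/(\<alpha>1 + 2))) {a..b}"
    using pint[OF ab, of "\<alpha>1 + 1"] A unfolding T_def by (simp add: add.assoc)
  have h3: "((\<lambda>x. T x powr \<alpha>2) has_integral ((b-a)/(\<alpha>2 + 1))) {a..b}"
    using pint[OF ab, of "\<alpha>2"] A unfolding T_def by simp
  have h4: "((\<lambda>x. T x powr (\<alpha>2 + 1)) has_integral ((b-a)/(\<alpha>2 + 2))) {a..b}"
    using pint[OF ab, of "\<alpha>2 + 1"] A unfolding T_def by (simp add: add.assoc)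
  have h2: "((\<lambda>x. T x) has_integral ((b-a)/2)) {a..b}"
  proof -
    have hh: "((\<lambda>x. T x powr 1) has_integral ((b-a)/2)) {a..b}"
      using pint[OF ab, of 1] unfolding T_def by (simp add: one_add_one)
    have pe: "\<And>x. x \<in> {a..b} \<Longrightarrow> T x powr 1 = T x" using ab by (auto simp: T_def)
    show ?thesis using has_integral_eq[OF pe hh] by simp
  qed
  have h0: "((\<lambda>x. c4) has_integral (c4 * (b - a))) {a..b}"
    using has_integral_const_real[of c4 a b] ab by (simp add: mult.commute)
  have HP: "(P has_integral
      (c1 * ((b-a)/(\<alpha>1 + 2)) + c2 * ((b-a)/2) + c3 * ((b-a)/(\<alpha>2 + 1)) - c3 * ((b-a)/(\<alpha>2 + 2))
      + (c4 * (b - a) - c4 * ((b-a)/2) - c4 * ((b-a)/(\<alpha>2 + 1)) + c4 * ((b-a)/(\<alpha>2 + 2))))) {a..b}"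
    unfolding P_def
    by (intro has_integral_add has_integral_diff has_integral_mult_right h0 h1 h2 h3 h4)
  have P0: "x \<in> {a..b} \<Longrightarrow> 0 \<le> P x" for x using IP I0 order_trans by blast
  have SP: "set_integrable lborel {a..b} P"
  proof -
    have mP: "(\<lambda>x. indicator {a..b} x *\<^sub>R P x) \<in> borel_measurable lborel"
      unfolding P_def T_def by measurable
    have "integrable lebesgue (\<lambda>x. indicator {a..b} x *\<^sub>R P x)"
      using nonnegative_absolutely_integrable_1[OF has_integral_integrable[OF HP] P0]
      unfolding set_integrable_def by simp
    then show ?thesis unfolding set_integrable_def
      by (subst (asm) integrable_completion[OF mP])
  qed
  have LP: "(LINT x:{a..b}|lborel. P x) = 
      (c1 * ((b-a)/(\<alpha>1 + 2)) + c2 * ((b-a)/2) + c3 * ((b-a)/(\<alpha>2 + 1)) - c3 * ((b-a)/(\<alpha>2 + 2))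
      + (c4 * (b - a) - c4 * ((b-a)/2) - c4 * ((b-a)/(\<alpha>2 + 1)) + c4 * ((b-a)/(\<alpha>2 + 2))))"
    using set_borel_integral_eq_integral(2)[OF SP] HP by (simp add: integral_unique)
  have mf: "(\<lambda>x. indicator {a..b} x * f x) \<in> borel_measurable lborel"
    using A(19) unfolding set_integrable_def by (simp add: borel_measurable_integrable)
  have mg: "(\<lambda>x. indicator {a..b} x * g x) \<in> borel_measurable lborel"
    using A(20) unfolding set_integrable_def by (simp add: borel_measurable_integrable)
  have eqI: "(\<lambda>x. indicator {a..b} x *\<^sub>R I x) = (\<lambda>x. indicator {a..b} x *
      (pow0 (indicator {a..b} x * f x) ((x - a) / (b - a)) * pow0 (indicator {a..b} x * g x) ((b - x) / (b - a))))"
    by (rule ext) (simp add: indicator_def I_def)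
  have mI: "(\<lambda>x. indicator {a..b} x *\<^sub>R I x) \<in> borel_measurable lborel"
    unfolding eqI using mf mg by measurable
  have SI: "set_integrable lborel {a..b} I"
    unfolding set_integrable_def
  proof (rule Bochner_Integration.integrable_bound[OF SP[unfolded set_integrable_def] mI])
    show "AE x in lborel. norm (indicator {a..b} x *\<^sub>R I x) \<le> norm (indicator {a..b} x *\<^sub>R P x)"
      using IP I0 by (intro AE_I2) (force simp: indicator_def)
  qed
  have LI: "(LINT x:{a..b}|lborel. I x) \<le> (LINT x:{a..b}|lborel. P x)"
    by (rule set_integral_mono[OF SI SP IP])
  have W: "(1 / (b - a)) * (LINT x:{a..b}|lborel. P x) =
      c1 / (\<alpha>1 + 2) + c2 / 2 + c3 / (\<alpha>2 + 1) - c3 / (\<alpha>2 + 2) + c4 * (1 / 2 - 1 / (\<alpha>2 + 1) + 1 / (\<alpha>2 + 2))"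
    unfolding LP using ab by (simp add: field_simps)
  have k1: "c1 / (\<alpha>1 + 2) + c2 / 2 = 1 / (\<alpha>1 + 2) * fb + m1 * \<alpha>1 / (2 * (\<alpha>1 + 2)) * fa"
    proof -
    have nz: "\<alpha>1 + 2 \<noteq> 0" using A by simp
    have q1: "(fb - m1*fa)/(\<alpha>1+2) = fb/(\<alpha>1+2) - m1*fa/(\<alpha>1+2)" by (simp add: diff_divide_distrib)
    have q2: "m1*fa/2 - m1*fa/(\<alpha>1+2) = m1 * \<alpha>1 / (2 * (\<alpha>1 + 2)) * fa"
      using nz by (simp add: field_simps)
    show ?thesis unfolding c1_def c2_def q1 using q2 by simp
  qed
  have k2: "m1 * \<alpha>1 / (2 * (\<alpha>1 + 2)) * fa \<le> m1 / (2 * (\<alpha>1 + 2)) * fa"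
    using A fa0 by (intro mult_right_mono divide_right_mono) (auto simp: mult_left_le)
  have k3: "c3 / (\<alpha>2 + 1) - c3 / (\<alpha>2 + 2) = 1 / ((\<alpha>2 + 1) * (\<alpha>2 + 2)) * gb"
    proof -
    have "\<alpha>2 + 2 \<noteq> 0" "\<alpha>2 + 1 \<noteq> 0" using A by auto
    then show ?thesis unfolding c3_def by (simp add: field_simps)
  qed
  have k4: "c4 * (1 / 2 - 1 / (\<alpha>2 + 1) + 1 / (\<alpha>2 + 2)) = m2 * (\<alpha>2\<^sup>2 + 3 * \<alpha>2) / (2 * (\<alpha>2 + 1) * (\<alpha>2 + 2)) * ga"
    proof -
    have "\<alpha>2 + 2 \<noteq> 0" "\<alpha>2 + 1 \<noteq> 0" using A by auto
    then show ?thesis unfolding c4_def by (simp add: field_simps power2_eq_square)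
  qed
  have "(1 / (b - a)) * (LINT x:{a..b}|lborel. I x) \<le> (1 / (b - a)) * (LINT x:{a..b}|lborel. P x)"
    using LI ab by (intro mult_left_mono) auto
  then have "(1 / (b - a)) * (LINT x:{a..b}|lborel. I x) \<le> 1 / (\<alpha>1 + 2) * fb + m1 / (2 * (\<alpha>1 + 2)) * fa
           + 1 / ((\<alpha>2 + 1) * (\<alpha>2 + 2)) * gb
           + m2 * (\<alpha>2\<^sup>2 + 3 * \<alpha>2) / (2 * (\<alpha>2 + 1) * (\<alpha>2 + 2)) * ga"
    unfolding W using k1 k2 k3 k4 by linarith
  then show ?thesis using SI unfolding I_def fb_def fa_def gb_def ga_def by simp
qed

end
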